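(* There exist positive constants $c_1,c_2,c_3$, independent of $n$ and $t$, such that for all sufficiently large $n$, \[ \frac{1}{y_1(t)}\le \begin{cases} c_1\,n^{1-\beta}, & 0\le t\le 1,\\[2pt] c_2+c_3\,n^{\min\{1-\beta,\alpha\}}e^{-\lambda_1 t}, & t>1. \end{cases} \]
   Context: Fix constants $r_0,d_0\ge 0$ with $\lambda_0:=r_0-d_0<0$, $d_1>0$, $k>1$, $\alpha\in(0,1)$, $\beta\in(0,1)$. Let $f:[0,\infty)^2\to[0,\infty)$ satisfy: (A1) $f$ is Lipschitz continuous; (A2) $f(x,y)=r_1$ when $x+y=0$ and $f(x,y)=d_1$ when $x+y=1$, where $r_1:=f(0,0)>d_1$; (A3) $f(x,y)=\Phi(x+y)$ for some non-increasing function $\Phi:[0,\infty)\to[0,\infty)$; (A4) $f(x,y)\to0$ as $x\to\infty$ and as $y\to\infty$; (A5) $f(x,y)\ge \lambda_1(1-(x+y))+d_1$ for all $x,y\ge0$, where $\lambda_1:=r_1-d_1>0$. Put $\phi(x,y):=f(x,y)-d_1$. For each integer $n\ge1$ let $K=K(n):=kn$ and let $(y_0,y_1,y_\beta)$ solve \[ \dot y_0=\lambda_0 y_0,\qquad \dot y_1=\phi(y_0,y_1)\,y_1+n^{-\alpha}y_0,\qquad \dot y_\beta=\phi(y_0,y_1)\,y_\beta, \] with $(y_0(0),y_1(0),y_\beta(0))=(n/K,\,n^\beta/K,\,n^\beta/K)$. *)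

theory Defs
  imports "HOL-Analysis.Analysis"
begin

end

theory Submission
  imports Defs
begin

lemma antimono_within:
  fixes g g' :: "real \<Rightarrow> real"
  assumes ab: "0 \<le> a" "a \<le> b"
    and der: "\<And>t. a \<le> t \<Longrightarrow> (g has_real_derivative g' t) (at t within {0..})"
    and neg: "\<And>t. a \<le> t \<Longrightarrow> g' t \<le> 0"
  shows "g b \<le> g a"
proof (rule DERIV_nonpos_imp_decreasing_open[OF ab(2)])
  fix x assume x: "a < x" "x < b"
  have "at x within {0..} = at x"
    by (rule at_within_interior) (use x ab in auto)
  then show "\<exists>y. DERIV g x :> y \<and> y \<le> 0"
    using der[of x] neg[of x] x by auto
next
  show "continuous_on {a..b} g"
    by (rule DERIV_continuous_on[where D=g'])
      (rule has_field_derivative_subset[OF der], use ab in auto)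
qed

lemma barrier:
  fixes h h' :: "real \<Rightarrow> real"
  assumes h0: "h 0 > 0"
    and der: "\<And>t. 0 \<le> t \<Longrightarrow> (h has_real_derivative h' t) (at t within {0..})"
    and zer: "\<And>t. 0 < t \<Longrightarrow> t \<le> b \<Longrightarrow> h t = 0 \<Longrightarrow> h' t > 0"
    and t: "0 \<le> t" and tb: "t \<le> b"
  shows "h t > 0"
proof (rule ccontr)
  assume "\<not> h t > 0"
  hence ht: "h t \<le> 0" by simp
  have cont: "\<And>b. continuous_on {0..b} h"
    by (rule DERIV_continuous_on[where D=h'])
      (rule has_field_derivative_subset[OF der], auto)
  define Z where "Z = {s \<in> {0..t}. h s = 0}"
  obtain z0 where z0: "0 \<le> z0" "z0 \<le> t" "h z0 = 0"
    using IVT2'[where f=h and a=0 and b=t and y=0, OF ht _ t cont] h0 by auto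
  have Zne: "Z \<noteq> {}" using z0 unfolding Z_def by auto
  have Zb: "bdd_below Z" unfolding Z_def by (auto intro: bdd_belowI[where m=0])
  have Zc: "closed Z" unfolding Z_def
    by (rule continuous_closed_preimage_constant[OF cont]) auto
  define z where "z = Inf Z"
  have zZ: "z \<in> Z" unfolding z_def by (rule closed_contains_Inf[OF Zne Zb Zc])
  hence z: "0 \<le> z" "z \<le> t" "h z = 0" unfolding Z_def by auto
  have zpos: "z > 0" using z h0 by (cases "z = 0") auto
  have pos: "h s > 0" if s: "0 \<le> s" "s < z" for s
  proof (rule ccontr)
    assume "\<not> h s > 0"
    then obtain w where w: "0 \<le> w" "w \<le> s" "h w = 0"
      using IVT2'[where f=h and a=0 and b=s and y=0, OF _ _ s(1) cont] h0 by auto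
    hence "w \<in> Z" using s z unfolding Z_def by auto
    hence "z \<le> w" unfolding z_def using Zb by (rule cInf_lower)
    thus False using w s by simp
  qed
  have zb: "z \<le> b" using z tb by simp
  obtain d where d: "d > 0" "\<forall>hh>0. z - hh \<in> {0..} \<longrightarrow> hh < d \<longrightarrow> h (z - hh) < h z"
    using has_real_derivative_pos_inc_left[OF der[OF z(1)] zer[OF zpos zb z(3)]] by blast
  define hh where "hh = min (d/2) (z/2)"
  have "h (z - hh) < 0" using d zpos z unfolding hh_def by auto
  moreover have "h (z - hh) > 0" using pos[of "z - hh"] d zpos unfolding hh_def by auto
  ultimately show False by simp
qed

theorem mainTheorem4:
  fixes r0 d0 d1 k \<alpha> \<beta> :: real
    and f :: "real \<Rightarrow> real \<Rightarrow> real"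
    and y0 y1 yb :: "nat \<Rightarrow> real \<Rightarrow> real"
  assumes r0: "r0 \<ge> 0" and d0: "d0 \<ge> 0" and lam0: "r0 - d0 < 0"
    and d1: "d1 > 0" and k: "k > 1"
    and alpha: "0 < \<alpha>" "\<alpha> < 1" and beta: "0 < \<beta>" "\<beta> < 1"
    and f_nonneg: "\<And>x y. x \<ge> 0 \<Longrightarrow> y \<ge> 0 \<Longrightarrow> f x y \<ge> 0"
    and A1: "\<exists>L. L-lipschitz_on ({0..} \<times> {0..}) (\<lambda>(x, y). f x y)"
    and A2a: "\<And>x y. x \<ge> 0 \<Longrightarrow> y \<ge> 0 \<Longrightarrow> x + y = 0 \<Longrightarrow> f x y = f 0 0"
    and A2b: "\<And>x y. x \<ge> 0 \<Longrightarrow> y \<ge> 0 \<Longrightarrow> x + y = 1 \<Longrightarrow> f x y = d1"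
    and A2c: "f 0 0 > d1"
    and A3: "\<exists>\<Phi> :: real \<Rightarrow> real. (\<forall>s\<ge>0. \<forall>s'\<ge>s. \<Phi> s' \<le> \<Phi> s) \<and> (\<forall>s\<ge>0. \<Phi> s \<ge> 0)
               \<and> (\<forall>x\<ge>0. \<forall>y\<ge>0. f x y = \<Phi> (x + y))"
    and A4x: "\<And>y. y \<ge> 0 \<Longrightarrow> ((\<lambda>x. f x y) \<longlongrightarrow> 0) at_top"
    and A4y: "\<And>x. x \<ge> 0 \<Longrightarrow> ((\<lambda>y. f x y) \<longlongrightarrow> 0) at_top"
    and A5: "\<And>x y. x \<ge> 0 \<Longrightarrow> y \<ge> 0 \<Longrightarrow> f x y \<ge> (f 0 0 - d1) * (1 - (x + y)) + d1"
    and ode0: "\<And>n t. n \<ge> 1 \<Longrightarrow> t \<ge> 0 \<Longrightarrow>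
        (y0 n has_real_derivative (r0 - d0) * y0 n t) (at t within {0..})"
    and ode1: "\<And>n t. n \<ge> 1 \<Longrightarrow> t \<ge> 0 \<Longrightarrow>
        (y1 n has_real_derivative (f (y0 n t) (y1 n t) - d1) * y1 n t + real n powr (-\<alpha>) * y0 n t)
          (at t within {0..})"
    and odeb: "\<And>n t. n \<ge> 1 \<Longrightarrow> t \<ge> 0 \<Longrightarrow>
        (yb n has_real_derivative (f (y0 n t) (y1 n t) - d1) * yb n t) (at t within {0..})"
    and init0: "\<And>n. n \<ge> 1 \<Longrightarrow> y0 n 0 = real n / (k * real n)"
    and init1: "\<And>n. n \<ge> 1 \<Longrightarrow> y1 n 0 = real n powr \<beta> / (k * real n)"
    and initb: "\<And>n. n \<ge> 1 \<Longrightarrow> yb n 0 = real n powr \<beta> / (k * real n)"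
  shows "\<exists>c1 c2 c3 :: real. c1 > 0 \<and> c2 > 0 \<and> c3 > 0 \<and>
    (\<exists>N::nat. \<forall>n\<ge>N. \<forall>t::real.
       (0 \<le> t \<and> t \<le> 1 \<longrightarrow> 1 / y1 n t \<le> c1 * real n powr (1 - \<beta>)) \<and>
       (t > 1 \<longrightarrow> 1 / y1 n t \<le> c2 + c3 * real n powr (min (1 - \<beta>) \<alpha>) * exp (- (f 0 0 - d1) * t)))"
proof -
  define l0 where "l0 = r0 - d0"
  define l1 where "l1 = f 0 0 - d1"
  define c where "c = - l1 / (k * l0)"
  define a where "a = exp l0 / k"
  define \<delta> where "\<delta> = min (a/2) (1 - 1/k)"
  have l0n: "l0 < 0" using lam0 l0_def by simp
  have l1p: "l1 > 0" using A2c l1_def by simp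
  have kp: "k > 0" using k by simp
  have cp: "c > 0" unfolding c_def using l0n l1p kp by (simp add: divide_pos_neg mult_pos_neg)
  have ap: "a > 0" unfolding a_def using kp by simp
  have dp: "\<delta> > 0" unfolding \<delta>_def using ap k by (simp add: field_simps)
  have da: "\<delta> < a" unfolding \<delta>_def using ap by simp
  have dk: "\<delta> \<le> 1 - 1/k" unfolding \<delta>_def by simp
  have phi: "f x y - d1 \<ge> l1 * (1 - x - y)" if "x \<ge> 0" "y \<ge> 0" for x y
    using A5[OF that] unfolding l1_def by (simp add: algebra_simps)
  have Y0: "y0 n t = exp (l0 * t) / k" if n: "n \<ge> 1" and t: "t \<ge> 0" for n t
  proof -
    define g where "g = (\<lambda>t. y0 n t * exp (- l0 * t))"
    have gd: "(g has_real_derivative 0) (at t within {0..})" if "t \<ge> 0" for t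
      unfolding g_def
      by (rule derivative_eq_intros ode0[OF n that] refl)+ (simp add: l0_def algebra_simps)
    have gd': "((\<lambda>t. - g t) has_real_derivative 0) (at t within {0..})" if "t \<ge> 0" for t
      using DERIV_minus[OF gd[OF that]] by simp
    have "g t \<le> g 0" by (rule antimono_within[OF order_refl t gd]) auto
    moreover have "- g t \<le> - g 0" by (rule antimono_within[OF order_refl t gd']) auto
    ultimately have "g t = g 0" by simp
    hence "y0 n t * exp (- l0 * t) = 1 / k" using init0[OF n] n unfolding g_def by simp
    thus ?thesis by (simp add: exp_minus field_simps)
  qed
  have y0b: "0 < y0 n t" "y0 n t \<le> 1/k" if "n \<ge> 1" "t \<ge> 0" for n t
  proof -
    have "exp (l0 * t) \<le> 1" using l0n that by (simp add: mult_nonpos_nonneg)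
    thus "0 < y0 n t" "y0 n t \<le> 1/k" using Y0[OF that] kp by (auto simp: divide_right_mono)
  qed
  have npa: "real n powr (-\<alpha>) > 0" if "n \<ge> 1" for n :: nat using that by simp
  have y1pos: "y1 n t > 0" if n: "n \<ge> 1" and t: "t \<ge> 0" for n t
  proof (rule barrier[OF _ ode1[OF n] _ t order_refl])
    show "0 < y1 n 0" using init1[OF n] n kp by simp
    fix s assume "0 < s" "s \<le> t" "y1 n s = 0"
    thus "0 < (f (y0 n s) (y1 n s) - d1) * y1 n s + real n powr - \<alpha> * y0 n s"
      using npa[OF n] y0b[OF n, of s] by simp
  qed
  define D where "D = (\<lambda>n t. (f (y0 n t) (y1 n t) - d1) * y1 n t + real n powr (-\<alpha>) * y0 n t)"
  have Dge: "D n t \<ge> l1 * (1 - y0 n t - y1 n t) * y1 n t + real n powr (-\<alpha>) * y0 n t"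
    if n: "n \<ge> 1" and t: "t \<ge> 0" and y: "y1 n t \<ge> 0" for n t
  proof -
    have "f (y0 n t) (y1 n t) - d1 \<ge> l1 * (1 - y0 n t - y1 n t)"
      using phi[of "y0 n t" "y1 n t"] y0b[OF n t] y by simp
    hence "(f (y0 n t) (y1 n t) - d1) * y1 n t \<ge> l1 * (1 - y0 n t - y1 n t) * y1 n t"
      using y by (rule mult_right_mono)
    thus ?thesis unfolding D_def by simp
  qed
  have low1: "y1 n 1 > \<delta> * real n powr (-\<alpha>)" if n: "n \<ge> 1" for n
  proof -
    have "y1 n 1 - \<delta> * real n powr (-\<alpha>) * 1 > 0"
    proof (rule barrier[where h="\<lambda>t. y1 n t - \<delta> * real n powr (-\<alpha>) * t"
          and h'="\<lambda>t. D n t - \<delta> * real n powr (-\<alpha>)" and b=1])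
      show "0 < y1 n 0 - \<delta> * real n powr - \<alpha> * 0" using init1[OF n] n kp by simp
      fix t :: real assume t: "0 \<le> t"
      show "((\<lambda>t. y1 n t - \<delta> * real n powr - \<alpha> * t) has_real_derivative
          D n t - \<delta> * real n powr - \<alpha>) (at t within {0..})"
        unfolding D_def
        by (rule derivative_eq_intros ode1[OF n t] refl)+ simp
    next
      fix t :: real assume t: "0 < t" and True: "t \<le> 1" and z: "y1 n t - \<delta> * real n powr - \<alpha> * t = 0"
      show "0 < D n t - \<delta> * real n powr - \<alpha>"
      proof -
        have np1: "real n powr - \<alpha> \<le> 1" using n alpha ge_one_powr_ge_zero[of "real n" \<alpha>] by (simp add: powr_minus_divide)
        have yy: "y1 n t = \<delta> * real n powr - \<alpha> * t" using z by simp
        have y1nn: "y1 n t \<ge> 0" using yy dp npa[OF n] t by simp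
        have "y1 n t \<le> \<delta>"
        proof -
          have "\<delta> * real n powr - \<alpha> * t \<le> \<delta> * 1 * 1"
            using dp npa[OF n] np1 True t by (intro mult_mono) auto
          thus ?thesis using yy by simp
        qed
        hence "1 - y0 n t - y1 n t \<ge> 0" using y0b[OF n, of t] t dk by simp
        hence A: "l1 * (1 - y0 n t - y1 n t) * y1 n t \<ge> 0" using l1p y1nn by simp
        have "exp l0 \<le> exp (l0 * t)" using True l0n t by (simp add: mult_le_cancel_left1)
        hence "a \<le> y0 n t" using Y0[OF n, of t] t kp unfolding a_def by (simp add: divide_right_mono)
        hence "\<delta> < y0 n t" using da by simp
        hence "real n powr - \<alpha> * \<delta> < real n powr - \<alpha> * y0 n t"
          using npa[OF n] by simp
        thus ?thesis using Dge[OF n _ y1nn] A t by (simp add: algebra_simps)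
      qed
    qed auto
    thus ?thesis by simp
  qed
  have boundA: "1 / y1 n t \<le> exp c * exp (l1*t0) * (1 / y1 n t0) * exp (- l1 * t) + exp c"
    if n: "n \<ge> 1" and t0: "0 \<le> t0" and tt: "t0 \<le> t" for n t0 t
  proof -
    define E where "E = (\<lambda>t. exp (l1*t + c*exp(l0*t)))"
    define g where "g = (\<lambda>t. E t / y1 n t - exp c * exp (l1 * t))"
    define G where "G = (\<lambda>s. (E s * (l1 + c*(exp(l0* s)*l0)) * y1 n s - E s * D n s) / (y1 n s)^2
       - exp c * (exp(l1* s) * l1))"
    have gd: "(g has_real_derivative G s) (at s within {0..})" if s: "t0 \<le> s" for s
    proof -
      have s0: "s \<ge> 0" using s t0 by simp
      have yp: "y1 n s \<noteq> 0" using y1pos[OF n s0] by simp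
      have d1: "(y1 n has_real_derivative D n s) (at s within {0..})"
        unfolding D_def by (rule ode1[OF n s0])
      have hE: "(E has_real_derivative E s * (l1 + c*(exp(l0 * s)*l0))) (at s within {0..})"
        unfolding E_def by (rule derivative_eq_intros refl)+ (simp add: algebra_simps)
      have hQ: "((\<lambda>t. E t / y1 n t) has_real_derivative
          (E s * (l1 + c*(exp(l0 * s)*l0)) * y1 n s - E s * D n s) / (y1 n s * y1 n s)) (at s within {0..})"
        by (rule DERIV_divide[OF hE d1 yp])
      have hX: "((\<lambda>t. exp c * exp (l1 * t)) has_real_derivative exp c * (exp(l1 * s) * l1)) (at s within {0..})"
        by (rule derivative_eq_intros refl)+ (simp add: algebra_simps)
      show ?thesis unfolding g_def G_def
        using DERIV_diff[OF hQ hX] by (simp add: power2_eq_square)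
    qed
    have gn: "G s \<le> 0" if s: "t0 \<le> s" for s
    proof -
      have s0: "s \<ge> 0" using s t0 by simp
      have yp: "y1 n s > 0" using y1pos[OF n s0] by simp
      have Ep: "E s > 0" unfolding E_def by simp
      have cl: "c * l0 = - l1 / k" unfolding c_def using l0n kp by (simp add: field_simps)
      have e1: "l1 + c*(exp(l0* s)*l0) = l1 * (1 - y0 n s)"
      proof -
        have "l1 + c*(exp(l0 * s)*l0) = l1 + (c*l0)*exp(l0 * s)" by (simp add: algebra_simps)
        also have "\<dots> = l1 * (1 - exp(l0 * s)/k)" unfolding cl using kp by (simp add: field_simps)
        also have "\<dots> = l1*(1 - y0 n s)" using Y0[OF n s0] by simp
        finally show ?thesis .
      qed
      have "D n s \<ge> l1 * (1 - y0 n s - y1 n s) * y1 n s"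
      proof -
        have "real n powr (-\<alpha>) * y0 n s > 0" using npa[OF n] y0b[OF n s0] by simp
        thus ?thesis using Dge[OF n s0 less_imp_le[OF yp]] by linarith
      qed
      hence num: "E s * (l1 + c*(exp(l0* s)*l0)) * y1 n s - E s * D n s \<le> E s * l1 * (y1 n s)^2"
        unfolding e1
      proof -
        assume H: "D n s \<ge> l1 * (1 - y0 n s - y1 n s) * y1 n s"
        have "E s * D n s \<ge> E s * (l1 * (1 - y0 n s - y1 n s) * y1 n s)"
          using H Ep by (simp add: mult_left_mono)
        hence "E s * (l1 * (1 - y0 n s)) * y1 n s - E s * D n s \<le>
          E s * (l1 * (1 - y0 n s)) * y1 n s - E s * (l1 * (1 - y0 n s - y1 n s) * y1 n s)" by linarith
        also have "\<dots> = E s * l1 * (y1 n s)^2" by (simp add: algebra_simps power2_eq_square)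
        finally show "E s * (l1 * (1 - y0 n s)) * y1 n s - E s * D n s \<le> E s * l1 * (y1 n s)^2" .
      qed
      have "(E s * (l1 + c*(exp(l0* s)*l0)) * y1 n s - E s * D n s) / (y1 n s)^2 \<le> E s * l1"
        using num yp by (simp add: divide_le_eq)
      moreover have "E s \<le> exp c * exp (l1 * s)"
      proof -
        have "exp (l0* s) \<le> 1" using l0n s0 by (simp add: mult_nonpos_nonneg)
        hence "c * exp(l0* s) \<le> c" using cp by simp
        thus ?thesis unfolding E_def by (simp add: mult_exp_exp[symmetric] add.commute)
      qed
      hence "E s * l1 \<le> exp c * (exp (l1 * s) * l1)" using l1p by (simp add: mult_right_mono)
      ultimately show ?thesis unfolding G_def by simp
    qed
    have "g t \<le> g t0" by (rule antimono_within[OF t0 tt gd gn])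
    hence A: "E t / y1 n t \<le> E t0 / y1 n t0 + exp c * exp (l1 * t)"
      unfolding g_def by (smt (verit) exp_gt_zero mult_pos_pos)
    have B: "exp (l1 * t) / y1 n t \<le> E t / y1 n t"
      using y1pos[OF n, of t] t0 tt cp unfolding E_def by (intro divide_right_mono) auto
    have C: "E t0 / y1 n t0 \<le> exp (l1 * t0 + c) / y1 n t0"
    proof -
      have "exp (l0*t0) \<le> 1" using l0n t0 by (simp add: mult_nonpos_nonneg)
      hence "c * exp(l0*t0) \<le> c" using cp by simp
      thus ?thesis using y1pos[OF n t0] unfolding E_def by (intro divide_right_mono) auto
    qed
    have "exp (l1 * t) / y1 n t \<le> exp (l1 * t0 + c) / y1 n t0 + exp c * exp (l1 * t)"
      using A B C by simp
    hence "exp (-l1*t) * (exp (l1 * t) / y1 n t) \<le> exp (-l1*t) * (exp (l1 * t0 + c) / y1 n t0 + exp c * exp (l1 * t))"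
      by (rule mult_left_mono) simp
    moreover have "exp (-l1*t) * (exp (l1 * t) / y1 n t) = 1 / y1 n t"
      by (simp add: exp_minus field_simps)
    moreover have "exp (-l1*t) * (exp (l1 * t0 + c) / y1 n t0 + exp c * exp (l1 * t))
       = exp c * exp (l1*t0) * (1 / y1 n t0) * exp (- l1 * t) + exp c"
      by (simp add: exp_add exp_minus field_simps)
    ultimately show ?thesis by argo
  qed
  have inv0: "1 / y1 n 0 = k * real n powr (1 - \<beta>)" if n: "n \<ge> 1" for n
  proof -
    have np: "real n > 0" using n by simp
    have "1 / y1 n 0 = k * (real n / real n powr \<beta>)" using init1[OF n] np kp by simp
    also have "real n / real n powr \<beta> = real n powr (1 - \<beta>)"
      using np by (simp add: powr_diff)
    finally show ?thesis .
  qed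
  have nb1: "real n powr (1 - \<beta>) \<ge> 1" if n: "n \<ge> 1" for n :: nat
    using n beta ge_one_powr_ge_zero[of "real n" "1 - \<beta>"] by simp
  have inv1: "1 / y1 n 1 \<le> real n powr \<alpha> / \<delta>" if n: "n \<ge> 1" for n
  proof -
    have np: "real n > 0" using n by simp
    have pos: "\<delta> * real n powr (-\<alpha>) > 0" using dp npa[OF n] by simp
    have "1 / y1 n 1 \<le> 1 / (\<delta> * real n powr (-\<alpha>))"
      using low1[OF n] pos by (intro divide_left_mono) auto
    also have "\<dots> = real n powr \<alpha> / \<delta>" using np by (simp add: powr_minus field_simps)
    finally show ?thesis .
  qed
  define c3 where "c3 = max (exp c * k) (exp c * exp l1 / \<delta>)"
  have c3p: "c3 > 0" unfolding c3_def using kp by (simp add: less_max_iff_disj)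
  have P1: "0 < exp c * (k + 1)" using kp by simp
  have P2: "0 < exp c" by simp
  have main: "\<exists>N. \<forall>n\<ge>N. \<forall>t. (0 \<le> t \<and> t \<le> 1 \<longrightarrow> 1 / y1 n t \<le> exp c * (k + 1) * real n powr (1 - \<beta>)) \<and>
        (1 < t \<longrightarrow> 1 / y1 n t \<le> exp c + c3 * real n powr min (1 - \<beta>) \<alpha> * exp (- (f 0 0 - d1) * t))"
    proof (intro exI[of _ 1] allI impI conjI)
      fix n :: nat and t :: real assume n: "1 \<le> n"
      have B0: "1 / y1 n t \<le> exp c * k * real n powr (1 - \<beta>) * exp (- l1 * t) + exp c" if "0 \<le> t" for t
        using boundA[OF n order_refl that] inv0[OF n] by simp
      {
        assume t: "0 \<le> t \<and> t \<le> 1"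
        have "exp (- l1 * t) \<le> 1" using t l1p by simp
        hence "exp c * k * real n powr (1 - \<beta>) * exp (- l1 * t) \<le> exp c * k * real n powr (1 - \<beta>) * 1"
          using kp by (intro mult_left_mono) auto
        moreover have "exp c * 1 \<le> exp c * real n powr (1 - \<beta>)" using nb1[OF n] by (intro mult_left_mono) auto
        moreover have "exp c * (k + 1) * real n powr (1 - \<beta>) = exp c * k * real n powr (1 - \<beta>) * 1 + exp c * real n powr (1 - \<beta>)"
          by (simp add: algebra_simps)
        moreover note B0[of t]
        ultimately show "1 / y1 n t \<le> exp c * (k + 1) * real n powr (1 - \<beta>)"
          using t by linarith
      }
      {
        assume t: "1 < t"
        have ex: "exp (- (f 0 0 - d1) * t) = exp (- l1 * t)" unfolding l1_def by simp
        show "1 / y1 n t \<le> exp c + c3 * real n powr min (1 - \<beta>) \<alpha> * exp (- (f 0 0 - d1) * t)"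
        proof (cases "1 - \<beta> \<le> \<alpha>")
          case True
          hence m: "min (1 - \<beta>) \<alpha> = 1 - \<beta>" by simp
          have "exp c * k * real n powr (1 - \<beta>) * exp (- l1 * t) \<le> c3 * real n powr (1 - \<beta>) * exp (- l1 * t)"
            unfolding c3_def by (intro mult_right_mono) auto
          thus ?thesis unfolding m ex using B0[of t] t by linarith
        next
          case False
          hence m: "min (1 - \<beta>) \<alpha> = \<alpha>" by simp
          have B1: "1 / y1 n t \<le> exp c * exp l1 * (1 / y1 n 1) * exp (- l1 * t) + exp c"
            using boundA[OF n _ _, of 1 t] t by simp
          have "exp c * exp l1 * (1 / y1 n 1) * exp (- l1 * t) \<le> exp c * exp l1 * (real n powr \<alpha> / \<delta>) * exp (- l1 * t)"
            using inv1[OF n] by (intro mult_right_mono mult_left_mono) auto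
          also have "\<dots> = (exp c * exp l1 / \<delta>) * real n powr \<alpha> * exp (- l1 * t)" by simp
          also have "\<dots> \<le> c3 * real n powr \<alpha> * exp (- l1 * t)"
            unfolding c3_def by (intro mult_right_mono) auto
          finally show ?thesis unfolding m ex using B1 by linarith
        qed
      }
    qed
  show ?thesis using P1 P2 c3p main by blast
qed

end
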